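(* Let $g:\mathbb{R}\to\mathbb{R}$ be continuously differentiable, even and $\pi$-periodic. Let $n\ge 1$ and define $G(\vec{\mu})=\frac{1}{\pi}\int_{-\pi/2}^{\pi/2}\prod_{i=0}^{n-1} g(x+\mu_i)\,dx$ for $\vec\mu=(\mu_0,\dots,\mu_{n-1})\in\mathbb{R}^n$. Let $m$ be a positive integer and $\mu_0^*\in\mathbb{R}$ arbitrary, and let $\vec{\mu}^*$ be the point with $\mu^*_i=\mu^*_0+i\,m\pi/n$ for $i=0,\dots,n-1$ (the "search strategy $(m,n)$": consecutive observation angles separated by the constant $m\pi/n$). Then $\vec\mu^*$ is a stationary point of $G$: $\frac{\partial G}{\partial\mu_i}(\vec{\mu}^* )=0$ for all $i\in\{0,\dots,n-1\}$.
   Context: $g(x)$ is the probability of not detecting a target observed at angle $x$; $G$ is the average multi-observation probability of no detection over a uniformly distributed target orientation. *)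

theory Defs
  imports "HOL-Analysis.Analysis"
begin

text \<open>Average multi-observation non-detection probability G for observation angles
  mu 0, ..., mu (n-1) (only the first n entries of mu are used).\<close>
definition G_avg :: "(real \<Rightarrow> real) \<Rightarrow> nat \<Rightarrow> (nat \<Rightarrow> real) \<Rightarrow> real" where
  "G_avg g n mu = (1 / pi) * integral {-(pi/2)..pi/2} (\<lambda>x. \<Prod>i<n. g (x + mu i))"

definition strategy :: "real \<Rightarrow> nat \<Rightarrow> nat \<Rightarrow> nat \<Rightarrow> real" where
  "strategy mu0 m n i = mu0 + real i * real m * pi / real n"

end

theory Submission
  imports Defs
begin

lemma periodic_mult:
  assumes "\<And>x. g (x + pi) = (g x :: real)"
  shows "g (x + real k * pi) = g x"
proof (induction k)
  case (Suc k)
  have "g (x + real (Suc k) * pi) = g ((x + real k * pi) + pi)" by (simp add: algebra_simps)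
  also have "\<dots> = g x" using assms Suc by simp
  finally show ?case .
qed simp

lemma per_shift_le:
  fixes f :: "real \<Rightarrow> real"
  assumes cont: "continuous_on UNIV f" and per: "\<And>x. f (x + p) = f x" and p: "p \<ge> 0"
    and ab: "a \<le> b"
  shows "integral {a..a+p} f = integral {b..b+p} f"
proof -
  define F where "F u = integral {a..u} f" for u
  define \<phi> where "\<phi> u = F (u + p) - F u" for u
  have cab: "continuous_on {a..b+p} f" using cont continuous_on_subset by blast
  have dF: "(F has_real_derivative f u) (at u within {a..b+p})" if "u \<in> {a..b+p}" for u
    unfolding F_def by (rule integral_has_real_derivative[OF cab that])
  have "\<exists>c. \<forall>x\<in>{a..b}. \<phi> x = c"
  proof (rule has_field_derivative_zero_constant)
    fix u assume u: "u \<in> {a..b}"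
    have d1: "(F has_real_derivative f (u+p)) (at (u+p) within {a..b+p})"
      using dF u p by auto
    have d1': "(F has_real_derivative f (u+p)) (at (u+p) within (\<lambda>x. x + p) ` {a..b})"
      by (rule has_field_derivative_subset[OF d1]) (use p in auto)
    have d2: "((\<lambda>x. x + p) has_real_derivative 1) (at u within {a..b})"
      by (auto intro!: derivative_eq_intros)
    have "((\<lambda>x. F (x + p)) has_real_derivative f (u+p) * 1) (at u within {a..b})"
      using DERIV_image_chain[OF d1' d2] by (simp add: o_def)
    moreover have "(F has_real_derivative f u) (at u within {a..b})"
      by (rule has_field_derivative_subset[OF dF]) (use u p in auto)
    ultimately have "(\<phi> has_real_derivative f (u+p) * 1 - f u) (at u within {a..b})"
      unfolding \<phi>_def by (rule DERIV_diff)
    then show "(\<phi> has_real_derivative 0) (at u within {a..b})" using per by simp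
  qed simp
  then have "\<phi> a = \<phi> b" using ab by auto
  moreover have "\<phi> a = integral {a..a+p} f" unfolding \<phi>_def F_def by simp
  moreover have "\<phi> b = integral {b..b+p} f"
  proof -
    have "integral {a..b} f + integral {b..b+p} f = integral {a..b+p} f"
      using Henstock_Kurzweil_Integration.integral_combine[OF _ _ integrable_continuous_real[OF cab], of b] ab p by simp
    then show ?thesis unfolding \<phi>_def F_def by simp
  qed
  ultimately show ?thesis by simp
qed

lemma per_shift:
  fixes f :: "real \<Rightarrow> real"
  assumes cont: "continuous_on UNIV f" and per: "\<And>x. f (x + p) = f x" and p: "p \<ge> 0"
  shows "integral {a..a+p} f = integral {b..b+p} f"
proof (cases "a \<le> b")
  case True
  then show ?thesis by (rule per_shift_le[where f=f and p=p, OF cont per p])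
next
  case False
  then have "b \<le> a" by simp
  from per_shift_le[where f=f and p=p, OF cont per p this] show ?thesis by (rule sym)
qed

lemma per_shift_pi:
  fixes f :: "real \<Rightarrow> real"
  assumes cont: "continuous_on UNIV f" and per: "\<And>x. f (x + pi) = f x"
  shows "integral {-(pi/2)..pi/2} (\<lambda>x. f (x + s)) = integral {-(pi/2)..pi/2} f"
proof -
  have "integral {-(pi/2)..pi/2} (\<lambda>x. f (x + s)) = integral {(-(pi/2)+s) - s..(pi/2+s)-s} (\<lambda>x. f (x + s))"
    by simp
  also have "\<dots> = integral {-(pi/2)+s..pi/2+s} f" by (rule integral_shift_real_ivl)
  also have "\<dots> = integral {-(pi/2)+s..(-(pi/2)+s)+pi} f" by simp
  also have "\<dots> = integral {-(pi/2)..-(pi/2)+pi} f" by (rule per_shift[where f=f and p=pi, OF cont per]) simp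
  also have "\<dots> = integral {-(pi/2)..pi/2} f" by simp
  finally show ?thesis .
qed

theorem lemma3p2:
  fixes g g' :: "real \<Rightarrow> real" and n m :: nat and mu0 :: real
  assumes deriv: "\<And>x. (g has_real_derivative g' x) (at x)"
    and cont: "continuous_on UNIV g'"
    and even: "\<And>x. g (- x) = g x"
    and periodic: "\<And>x. g (x + pi) = g x"
    and n: "n \<ge> 1"
    and m: "m > 0"
  shows "\<forall>i<n. ((\<lambda>t. G_avg g n ((strategy mu0 m n)(i := t)))
                   has_real_derivative 0) (at (strategy mu0 m n i))"
proof (intro allI impI)
  fix i assume i: "i < n"
  define c where "c = real m * pi / real n"
  define mu where "mu = strategy mu0 m n"
  have mu_eq: "mu j = mu0 + real j * c" for j
    unfolding mu_def strategy_def c_def by simp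
  have nc: "real n * c = real m * pi" using n unfolding c_def by simp
  have gcont: "continuous_on UNIV g"
    by (rule continuous_at_imp_continuous_on) (use deriv DERIV_isCont in blast)
  note gc[continuous_intros] = continuous_on_compose2[OF gcont, simplified]
  note g'c[continuous_intros] = continuous_on_compose2[OF cont, simplified]
  have gper: "g (x + real k * pi) = g x" for x k by (rule periodic_mult[where g=g, OF periodic])
  have g'per: "g' (x + pi) = g' x" for x
  proof -
    have "((\<lambda>y. g (y + pi)) has_real_derivative g' (x + pi) * 1) (at x)"
      by (rule DERIV_chain2[OF deriv]) (auto intro!: derivative_eq_intros)
    then have "(g has_real_derivative g' (x + pi)) (at x)" using periodic by simp
    then show ?thesis using deriv DERIV_unique by blast
  qed
  define P where "P k x = (\<Prod>j\<in>{..<n}-{k}. g (x + mu j))" for k x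
  define q where "q k x = g' (x + mu k) * P k x" for k x
  define D where "D k = integral {-(pi/2)..pi/2} (q k)" for k
  have Pcont: "continuous_on UNIV (P k)" for k
    unfolding P_def by (intro continuous_intros)
  have qcont: "continuous_on UNIV (q k)" for k
    unfolding q_def by (intro continuous_intros Pcont)
  have qint: "q k integrable_on {-(pi/2)..pi/2}" for k
    using qcont continuous_on_subset integrable_continuous_real by blast
  have Geq: "G_avg g n (mu(i := t)) = (1/pi) * integral {-(pi/2)..pi/2} (\<lambda>x. g (x + t) * P i x)" for t
  proof -
    have "(\<Prod>j<n. g (x + (mu(i := t)) j)) = g (x + t) * P i x" for x
    proof -
      have "(\<Prod>j<n. g (x + (mu(i := t)) j)) = g (x + (mu(i := t)) i) * (\<Prod>j\<in>{..<n}-{i}. g (x + (mu(i := t)) j))"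
        by (rule prod.remove) (use i in auto)
      also have "(\<Prod>j\<in>{..<n}-{i}. g (x + (mu(i := t)) j)) = P i x"
        unfolding P_def by (rule prod.cong) auto
      finally show ?thesis by simp
    qed
    then show ?thesis unfolding G_avg_def by simp
  qed
  have L: "((\<lambda>t. integral (cbox (-(pi/2)) (pi/2)) (\<lambda>x. g (x + t) * P i x)) has_field_derivative
            integral (cbox (-(pi/2)) (pi/2)) (\<lambda>x. g' (x + mu i) * P i x)) (at (mu i) within UNIV)"
  proof (rule leibniz_rule_field_derivative[where fx = "\<lambda>t x. g' (x + t) * P i x"])
    fix t x
    show "((\<lambda>t. g (x + t) * P i x) has_field_derivative g' (x + t) * P i x) (at t within UNIV)"
    proof -
      have "((\<lambda>t. g (x + t)) has_real_derivative g' (x + t) * 1) (at t)"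
        by (rule DERIV_chain2[OF deriv]) (auto intro!: derivative_eq_intros)
      from DERIV_cmult_right[OF this, of "P i x"] show ?thesis by simp
    qed
  next
    fix t
    show "(\<lambda>x. g (x + t) * P i x) integrable_on cbox (-(pi/2)) (pi/2)"
      by (rule integrable_continuous) (intro continuous_intros Pcont[THEN continuous_on_subset] subset_UNIV)
  next
    show "continuous_on (UNIV \<times> cbox (-(pi/2)) (pi/2)) (\<lambda>(t, x). g' (x + t) * P i x)"
      unfolding split_beta by (intro continuous_intros continuous_on_compose2[OF Pcont[of i], simplified])
  qed auto
  have q0per: "q 0 (x + pi) = q 0 x" for x
  proof -
    have gx: "g (x + pi + mu j) = g (x + mu j)" for j using periodic[of "x + mu j"] by (simp add: algebra_simps)
    have "P 0 (x + pi) = P 0 x" unfolding P_def by (simp add: gx)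
    then show ?thesis unfolding q_def using g'per[of "x + mu 0"] by (simp add: algebra_simps)
  qed
  have hmod: "g (y + mu (k mod n)) = g (y + mu0 + real k * c)" for y k
  proof -
    have k: "real k = real (k mod n) + real n * real (k div n)"
      by (metis mod_mult_div_eq of_nat_add of_nat_mult)
    have "y + mu0 + real k * c = (y + mu (k mod n)) + real (m * (k div n)) * pi"
      unfolding mu_eq k using nc by (simp add: algebra_simps)
    then have "g (y + mu0 + real k * c) = g ((y + mu (k mod n)) + real (m * (k div n)) * pi)"
      by (rule arg_cong[where f=g])
    also have "\<dots> = g (y + mu (k mod n))" by (rule gper)
    finally show ?thesis by simp
  qed
  have qshift: "q k x = q 0 (x + real k * c)" if k: "k < n" for k x
  proof -
    define \<sigma> where "\<sigma> j = (k + j) mod n" for j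
    have inj: "inj_on \<sigma> {..<n}"
      unfolding \<sigma>_def inj_on_def
    proof (intro ballI impI)
      fix j j' assume j: "j \<in> {..<n}" "j' \<in> {..<n}" and eq: "(k + j) mod n = (k + j') mod n"
      have "int ((k+j) mod n) = int ((k+j') mod n)" using eq by simp
      then have "(int k + int j) mod int n = (int k + int j') mod int n" by (simp add: zmod_int)
      then have "int n dvd (int k + int j) - (int k + int j')" by (simp add: mod_eq_dvd_iff)
      then have d: "int n dvd int j - int j'" by simp
      show "j = j'"
      proof (rule ccontr)
        assume "j \<noteq> j'"
        then have "int j - int j' \<noteq> 0" by simp
        from dvd_imp_le_int[OF this d] j show False by simp
      qed
    qed
    have img: "\<sigma> ` {..<n} = {..<n}"
      by (rule endo_inj_surj) (use n inj in \<open>auto simp: \<sigma>_def\<close>)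
    have img2: "\<sigma> ` ({..<n} - {0}) = {..<n} - {k}"
    proof -
      have "\<sigma> ` ({..<n} - {0}) = \<sigma> ` {..<n} - \<sigma> ` {0}"
        by (rule inj_on_image_set_diff[OF inj]) (use n in auto)
      then show ?thesis using img k by (simp add: \<sigma>_def)
    qed
    have "P k x = (\<Prod>j\<in>\<sigma> ` ({..<n} - {0}). g (x + mu j))" unfolding P_def img2 ..
    also have "\<dots> = (\<Prod>j\<in>{..<n} - {0}. g (x + mu (\<sigma> j)))"
      by (rule prod.reindex[THEN trans]) (use inj in \<open>auto intro: inj_on_subset\<close>)
    also have "\<dots> = (\<Prod>j\<in>{..<n} - {0}. g (x + real k * c + mu j))"
      unfolding \<sigma>_def hmod by (rule prod.cong) (auto simp: mu_eq algebra_simps)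
    also have "\<dots> = P 0 (x + real k * c)" unfolding P_def by (simp add: algebra_simps)
    finally show ?thesis unfolding q_def by (simp add: mu_eq algebra_simps)
  qed
  have Deq: "D k = D 0" if "k < n" for k
  proof -
    have "D k = integral {-(pi/2)..pi/2} (\<lambda>x. q 0 (x + real k * c))"
    proof -
      have "q k = (\<lambda>x. q 0 (x + real k * c))" by (rule ext) (rule qshift[OF that])
      then show ?thesis unfolding D_def by simp
    qed
    also have "\<dots> = D 0" unfolding D_def by (rule per_shift_pi[where f="q 0", OF qcont q0per])
    finally show ?thesis .
  qed
  define E where "E x = (\<Prod>j<n. g (x + mu j))" for x
  have Eder: "(E has_real_derivative (\<Sum>k<n. q k x)) (at x)" for x
  proof -
    have "(E has_real_derivative (\<Sum>k<n. g' (x + mu k) * (\<Prod>j\<in>{..<n}-{k}. g (x + mu j)))) (at x)"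
      unfolding E_def
    proof (rule has_field_derivative_prod[where f="\<lambda>j u. g (u + mu j)" and f'="\<lambda>j. g' (x + mu j)"])
      fix j
      have "((\<lambda>u. g (u + mu j)) has_real_derivative g' (x + mu j) * 1) (at x)"
        by (rule DERIV_chain2[OF deriv]) (auto intro!: derivative_eq_intros)
      then show "((\<lambda>u. g (u + mu j)) has_real_derivative g' (x + mu j)) (at x)" by simp
    qed
    then show ?thesis unfolding q_def P_def .
  qed
  have "((\<lambda>x. \<Sum>k<n. q k x) has_integral (E (pi/2) - E (-(pi/2)))) {-(pi/2)..pi/2}"
    by (rule fundamental_theorem_of_calculus) (auto simp: has_real_derivative_iff_has_vector_derivative[symmetric] intro: has_field_derivative_at_within Eder)
  moreover have "E (pi/2) = E (-(pi/2))"
  proof -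
    have "E (pi/2) = E (-(pi/2) + pi)" by simp
    also have "\<dots> = E (-(pi/2))" unfolding E_def
    proof (rule prod.cong)
      fix j show "g (- (pi / 2) + pi + mu j) = g (- (pi / 2) + mu j)"
        using periodic[of "- (pi / 2) + mu j"] by (simp add: algebra_simps)
    qed simp
    finally show ?thesis .
  qed
  ultimately have "integral {-(pi/2)..pi/2} (\<lambda>x. \<Sum>k<n. q k x) = 0" by (simp add: integral_unique)
  moreover have "integral {-(pi/2)..pi/2} (\<lambda>x. \<Sum>k<n. q k x) = (\<Sum>k<n. D k)"
    unfolding D_def by (rule integral_sum) (auto intro: qint)
  ultimately have "(\<Sum>k<n. D k) = 0" by simp
  also have "(\<Sum>k<n. D k) = (\<Sum>k<n. D 0)" by (rule sum.cong) (auto intro: Deq)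
  also have "\<dots> = real n * D 0" by simp
  finally have "D 0 = 0" using n by simp
  then have Di: "D i = 0" using Deq[OF i] by simp
  have "((\<lambda>t. G_avg g n (mu(i := t))) has_real_derivative (1/pi) * D i) (at (mu i))"
  proof -
    have L': "((\<lambda>t. integral {-(pi/2)..pi/2} (\<lambda>x. g (x + t) * P i x)) has_real_derivative D i) (at (mu i))"
      using L by (simp add: D_def q_def[abs_def] cbox_interval)
    show ?thesis unfolding Geq by (rule DERIV_cmult[where c="1/pi", OF L'])
  qed
  then show "((\<lambda>t. G_avg g n ((strategy mu0 m n)(i := t))) has_real_derivative 0) (at (strategy mu0 m n i))"
    using Di unfolding mu_def by simp
qed

end
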